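(* Let $\mathcal{C}^1, \mathcal{C}^2 \subset \mathbb{R}^l$, $p^1, p^2$, $p = p^2 - p^1 \neq 0$, $\mathcal{C} = \mathcal{C}^1 - \mathcal{C}^2 + \{p\}$, and the iterates $\beta^l_k$, $M^{i*}_k$, $(\nu^*_m)$, $z_m, z^1_m, z^2_m$, $\lambda_k$ of the growth distance algorithm be as described in the context. Then for every iteration $k \geq 0$ executed by the algorithm, the following hold: (i) (Primal feasibility) With $\beta = \beta^l_k$, $z = \sum_{m \in M^{i*}_k} \beta \nu^*_m z_m$, $\alpha = 1/\beta$, and $z^i = \sum_{m \in M^{i*}_k} \beta \nu^*_m z^i_m$ for $i \in \{1,2\}$, the pair $(\beta, z)$ is feasible for the ray intersection problem and the triple $(\alpha, z^1, z^2)$ is feasible for the growth distance problem. Moreover, $\beta > 0$ and $\alpha > 0$. (ii) (Dual feasibility) $\langle \lambda_k, z_{m_1}\rangle = \langle \lambda_k, z_{m_2}\rangle$ for all $m_1, m_2 \in M^{i*}_k$, and $\langle \lambda_k, p\rangle > 0$. (iii) (Simplex property) $\{z_m\}_{m \in M^{i*}_k} \subset \mathcal{C}$ is a linearly independent set (with $|M^{i*}_k| = l$).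
   Context: A proper convex (PC) set is a compact convex subset of $\mathbb{R}^l$ with nonempty interior. For a compact convex $\mathcal{C}$, $B_r(x)$ is the closed Euclidean ball, the inradius is $r(\mathcal{C}, x) = \max\{r \ge 0 : B_r(x) \subset \mathcal{C}\}$, the support function is $s_v[\mathcal{C}](\lambda) = \max_{z \in \mathcal{C}} \langle \lambda, z\rangle$, and a support point function $s_p[\mathcal{C}]$ is any selection $s_p[\mathcal{C}](\lambda) \in \arg\max_{z \in \mathcal{C}} \langle \lambda, z\rangle$ (arbitrary selection allowed). Setting: $\mathcal{C}^1$ is a PC set, $\mathcal{C}^2 \neq \emptyset$ is compact convex, $p^1 \in \operatorname{int}\mathcal{C}^1$, $p^2 \in \mathcal{C}^2$, $p^1 \neq p^2$, $r^i = r(\mathcal{C}^i, p^i)$ are known, and $\underline{r} = r^1 + r^2 > 0$. Let $p = p^2 - p^1$ and $\mathcal{C} = \mathcal{C}^1 - \mathcal{C}^2 + \{p\} = \{z^1 - z^2 + p: z^i \in \mathcal{C}^i\}$; then $B_{\underline r}(0) \subset \mathcal{C}$. Support values/points of $\mathcal{C}$ are computed as $s_v[\mathcal{C}](\lambda) = s_v[\mathcal{C}^1](\lambda) + s_v[\mathcal{C}^2](-\lambda) + \langle \lambda, p\rangle$ and $s_p[\mathcal{C}](\lambda) = s_p[\mathcal{C}^1](\lambda) - s_p[\mathcal{C}^2](-\lambda) + p$. Growth distance problem: minimize $\alpha$ over $\alpha \ge 0$, $z^1 \in \mathcal{C}^1$, $z^2 \in \mathcal{C}^2$ subject to $\alpha(z^1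 - p^1) + p^1 = \alpha(z^2 - p^2) + p^2$. Ray intersection problem: maximize $\beta$ over $(\beta, z)$ subject to $z \in \mathcal{C}$, $z = \beta p$. Algorithm. Initialization ($k=0$): $M^o_0 = \emptyset$, $\beta^u_0 = \infty$; $M^i_0 = \{-l+1, \dots, 0\}$; choose $l-1$ linearly independent unit vectors $p^\perp_m$ ($m = -l+1, \dots, -1$) orthogonal to $p$, and set $z_m = K p^\perp_m + \epsilon p/\|p\|$ for $m = -l+1,\dots,-1$ and $z_0 = l\epsilon p/\|p\| - \sum_{m=-l+1}^{-1} z_m$, where $\epsilon > 0$, $K > 0$ are such that $\|z_m\| \le \underline r$ for all $m \in M^i_0$; for each such $m$ fix some $z^1_m \in \mathcal{C}^1$, $z^2_m \in \mathcal{C}^2$ with $z_m = z^1_m - z^2_m + p$. Set $M^{i*}_0 = M^i_0$, $\beta^l_0 = \epsilon/\|p\|$, the basic values $\nu^*_m = \|p\|/(l\epsilon)$ for $m \in M^{i*}_0$, and $\lambda_0 = p/\|p\|_\infty$. Iteration $k \ge 1$: compute $z^1_k = s_p[\mathcal{C}^1](\lambda_{k-1})$, $z^2_k = s_p[\mathcal{C}^2](-\lambda_{k-1})$, $z_k = z^1_k - z^2_k + p$, $v_k = s_v[\mathcal{C}](\lambda_{k-1})$. Outer update: $M^o_k = \{m^*\}$ with $m^* \in \arg\min_{m \in M^o_{k-1} \cup \{k\}} v_m/\langle \lambda_{m-1}, p\rangle$ and $\beta^u_k = \min\{\beta^u_{k-1}, v_k/\langle \lambda_{k-1}, p\rangle\}$.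 Inner update: set $M^i_k = M^i_{k-1} \cup \{k\}$ and solve the linear program $\min \sum_{m \in M^i_k} \nu_m$ subject to $\sum_{m \in M^i_k} \nu_m z_m = p$, $\nu \ge 0$, by the primal Simplex method started from the basis $M^{i*}_{k-1}$ (entering index chosen with most negative reduced cost, leaving index by the minimum-ratio test, with Bland's anti-cycling rule), giving an optimal basis $M^{i*}_k \subset M^i_k$ and basic optimal solution $(\nu^*_m)$ (with $\nu^*_m = 0$ off the basis); set $\beta^l_k = (\sum_m \nu^*_m)^{-1}$. Then $M^i_k$ may be pruned to any subset still containing $M^{i*}_k$. Set $\lambda_k = Z^{-\top}\mathbf{1}$ where $Z = [z_{m_1} \cdots z_{m_l}]$, $\{m_1,\dots,m_l\} = M^{i*}_k$, and then normalize $\lambda_k \leftarrow \lambda_k/\|\lambda_k\|_\infty$. The algorithm stops when $\beta^u_k/\beta^l_k - 1 < \epsilon_{tol}$ or $k = K_{max}$. *)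

theory Defs
  imports "HOL-Analysis.Analysis"
begin

definition PC_set :: "'a::euclidean_space set \<Rightarrow> bool" where
  "PC_set S \<longleftrightarrow> compact S \<and> convex S \<and> interior S \<noteq> {}"

definition inradius :: "'a::euclidean_space set \<Rightarrow> 'a \<Rightarrow> real" where
  "inradius S x = (GREATEST r. 0 \<le> r \<and> cball x r \<subseteq> S)"

definition mink_set :: "'a::euclidean_space set \<Rightarrow> 'a set \<Rightarrow> 'a \<Rightarrow> 'a set" where
  "mink_set C1 C2 p = {z1 - z2 + p | z1 z2. z1 \<in> C1 \<and> z2 \<in> C2}"

definition is_support_point :: "'a::euclidean_space set \<Rightarrow> 'a \<Rightarrow> 'a \<Rightarrow> bool" where
  "is_support_point S lam z \<longleftrightarrow> z \<in> S \<and> (\<forall>y\<in>S. lam \<bullet> y \<le> lam \<bullet> z)"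

definition gd_feasible ::
  "'a::euclidean_space set \<Rightarrow> 'a set \<Rightarrow> 'a \<Rightarrow> 'a \<Rightarrow> real \<Rightarrow> 'a \<Rightarrow> 'a \<Rightarrow> bool" where
  "gd_feasible C1 C2 p1 p2 \<alpha> z1 z2 \<longleftrightarrow>
     0 \<le> \<alpha> \<and> z1 \<in> C1 \<and> z2 \<in> C2 \<and> \<alpha> *\<^sub>R (z1 - p1) + p1 = \<alpha> *\<^sub>R (z2 - p2) + p2"

definition ray_feasible :: "'a::euclidean_space set \<Rightarrow> 'a \<Rightarrow> real \<Rightarrow> 'a \<Rightarrow> bool" where
  "ray_feasible C p \<beta> z \<longleftrightarrow> z \<in> C \<and> z = \<beta> *\<^sub>R p"

section \<open>Primal Simplex method for  min sum nu  s.t.  sum nu_m z_m = p, nu \<ge> 0\<close>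

definition coords :: "(int \<Rightarrow> 'a::euclidean_space) \<Rightarrow> int set \<Rightarrow> 'a \<Rightarrow> int \<Rightarrow> real" where
  "coords z B v = (THE c. (\<forall>i. i \<notin> B \<longrightarrow> c i = 0) \<and> (\<Sum>i\<in>B. c i *\<^sub>R z i) = v)"

text \<open>Reduced cost of column j (all costs equal 1): c_j - c_B^T Z_B^{-1} z_j.\<close>
definition reduced_cost :: "(int \<Rightarrow> 'a::euclidean_space) \<Rightarrow> int set \<Rightarrow> int \<Rightarrow> real" where
  "reduced_cost z B j = 1 - (\<Sum>i\<in>B. coords z B (z j) i)"

definition simplex_pivot ::
  "int set \<Rightarrow> (int \<Rightarrow> 'a::euclidean_space) \<Rightarrow> 'a \<Rightarrow> int set \<Rightarrow> int set \<Rightarrow> bool" where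
  "simplex_pivot M z p B B' \<longleftrightarrow>
     (\<exists>j\<in>M - B. \<exists>i\<in>B.
        reduced_cost z B j < 0 \<and>
        (\<forall>j'\<in>M. reduced_cost z B j \<le> reduced_cost z B j') \<and>
        coords z B (z j) i > 0 \<and>
        (\<forall>i'\<in>B. coords z B (z j) i' > 0 \<longrightarrow>
            coords z B p i / coords z B (z j) i \<le> coords z B p i' / coords z B (z j) i') \<and>
        B' = insert j (B - {i}))"

definition simplex_optimal :: "int set \<Rightarrow> (int \<Rightarrow> 'a::euclidean_space) \<Rightarrow> int set \<Rightarrow> bool" where
  "simplex_optimal M z B \<longleftrightarrow> (\<forall>j\<in>M. 0 \<le> reduced_cost z B j)"

definition simplex_run ::
  "int set \<Rightarrow> (int \<Rightarrow> 'a::euclidean_space) \<Rightarrow> 'a \<Rightarrow> int set \<Rightarrow> int set \<Rightarrow> bool" where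
  "simplex_run M z p B0 B \<longleftrightarrow> (simplex_pivot M z p)\<^sup>*\<^sup>* B0 B \<and> simplex_optimal M z B"

definition dual_vec :: "(int \<Rightarrow> 'a::euclidean_space) \<Rightarrow> int set \<Rightarrow> 'a" where
  "dual_vec z B = (THE y. \<forall>m\<in>B. y \<bullet> z m = 1)"

definition init_idx :: "'a::euclidean_space itself \<Rightarrow> int set" where
  "init_idx _ = {- int DIM('a) + 1 .. 0}"

definition gd_run ::
  "'a::euclidean_space set \<Rightarrow> 'a set \<Rightarrow> 'a \<Rightarrow> 'a \<Rightarrow> real \<Rightarrow> nat \<Rightarrow>
   real \<Rightarrow> real \<Rightarrow> (int \<Rightarrow> 'a) \<Rightarrow>
   (nat \<Rightarrow> int set) \<Rightarrow> (nat \<Rightarrow> int set) \<Rightarrow>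
   (int \<Rightarrow> 'a) \<Rightarrow> (int \<Rightarrow> 'a) \<Rightarrow> (int \<Rightarrow> 'a) \<Rightarrow> (nat \<Rightarrow> 'a) \<Rightarrow> bool" where
  "gd_run C1 C2 p1 p2 r N \<epsilon> K pperp Mi Mstar z z1 z2 lam \<longleftrightarrow>
     (let p = p2 - p1; I0 = init_idx TYPE('a); P = {- int DIM('a) + 1 .. -1} in
      \<comment> \<open>initialization, k = 0\<close>
      0 < \<epsilon> \<and> 0 < K \<and>
      (\<forall>m\<in>P. norm (pperp m) = 1 \<and> pperp m \<bullet> p = 0) \<and>
      inj_on pperp P \<and> independent (pperp ` P) \<and>
      (\<forall>m\<in>P. z m = K *\<^sub>R pperp m + (\<epsilon> / norm p) *\<^sub>R p) \<and>
      z 0 = (real DIM('a) * \<epsilon> / norm p) *\<^sub>R p - (\<Sum>m\<in>P. z m) \<and>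
      (\<forall>m\<in>I0. norm (z m) \<le> r) \<and>
      (\<forall>m\<in>I0. z1 m \<in> C1 \<and> z2 m \<in> C2 \<and> z m = z1 m - z2 m + p) \<and>
      Mi 0 = I0 \<and> Mstar 0 = I0 \<and>
      lam 0 = (1 / infnorm p) *\<^sub>R p \<and>
      \<comment> \<open>iterations k = 1..N\<close>
      (\<forall>k. 1 \<le> k \<and> k \<le> N \<longrightarrow>
         is_support_point C1 (lam (k - 1)) (z1 (int k)) \<and>
         is_support_point C2 (- lam (k - 1)) (z2 (int k)) \<and>
         z (int k) = z1 (int k) - z2 (int k) + p \<and>
         simplex_run (insert (int k) (Mi (k - 1))) z p (Mstar (k - 1)) (Mstar k) \<and>
         Mstar k \<subseteq> Mi k \<and> Mi k \<subseteq> insert (int k) (Mi (k - 1)) \<and>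
         lam k = (1 / infnorm (dual_vec z (Mstar k))) *\<^sub>R dual_vec z (Mstar k)))"

definition basic_sol :: "(int \<Rightarrow> 'a::euclidean_space) \<Rightarrow> 'a \<Rightarrow> int set \<Rightarrow> int \<Rightarrow> real" where
  "basic_sol z p B = coords z B p"

definition beta_low :: "(int \<Rightarrow> 'a::euclidean_space) \<Rightarrow> 'a \<Rightarrow> int set \<Rightarrow> real" where
  "beta_low z p B = 1 / (\<Sum>m\<in>B. basic_sol z p B m)"

end

theory Submission
  imports Defs
begin

definition isbasis :: "(int \<Rightarrow> 'a::euclidean_space) \<Rightarrow> int set \<Rightarrow> bool" where
  "isbasis z B \<longleftrightarrow> finite B \<and> inj_on z B \<and> independent (z ` B) \<and> card B = DIM('a)"

lemma isbasis_span:
  assumes "isbasis z B" shows "span (z ` B) = UNIV"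
proof -
  have "card (z ` B) = dim (UNIV::'a set)"
    using assms unfolding isbasis_def by (simp add: card_image)
  then have "UNIV \<subseteq> span (z ` B)"
    using card_eq_dim[of "z ` B" UNIV] assms unfolding isbasis_def by auto
  then show ?thesis by auto
qed

lemma indep_coeffs_zero:
  fixes z :: "int \<Rightarrow> 'a::euclidean_space"
  assumes "finite B" "inj_on z B" "independent (z ` B)"
    and "(\<Sum>i\<in>B. u i *\<^sub>R z i) = 0" "i \<in> B"
  shows "u i = 0"
proof -
  have "(\<Sum>x\<in>z ` B. u (inv_into B z x) *\<^sub>R x) = (\<Sum>i\<in>B. u (inv_into B z (z i)) *\<^sub>R z i)"
    using assms(2) by (simp add: sum.reindex)
  also have "\<dots> = (\<Sum>i\<in>B. u i *\<^sub>R z i)"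
    using assms(2) by (intro sum.cong) auto
  finally have "(\<Sum>x\<in>z ` B. u (inv_into B z x) *\<^sub>R x) = 0" using assms(4) by simp
  from independentD[OF assms(3) _ order_refl this, of "z i"] assms
  show ?thesis by auto
qed

lemma coords_eq:
  assumes "isbasis z B" "\<forall>i. i \<notin> B \<longrightarrow> c i = 0" "(\<Sum>i\<in>B. c i *\<^sub>R z i) = v"
  shows "coords z B v = c"
  unfolding coords_def
proof (rule the_equality)
  show "(\<forall>i. i \<notin> B \<longrightarrow> c i = 0) \<and> (\<Sum>i\<in>B. c i *\<^sub>R z i) = v" using assms by auto
next
  fix c' assume h: "(\<forall>i. i \<notin> B \<longrightarrow> c' i = 0) \<and> (\<Sum>i\<in>B. c' i *\<^sub>R z i) = v"
  have "(\<Sum>i\<in>B. (c' i - c i) *\<^sub>R z i) = 0"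
    using h assms(3) by (simp add: scaleR_left_diff_distrib sum_subtractf)
  then have "\<forall>i\<in>B. c' i - c i = 0"
    using indep_coeffs_zero[of B z "\<lambda>i. c' i - c i"] assms(1) unfolding isbasis_def by blast
  then show "c' = c" using h assms(2) by (auto intro!: ext)
qed

lemma coords_exists:
  assumes "isbasis z B"
  shows "\<exists>c. (\<forall>i. i \<notin> B \<longrightarrow> c i = 0) \<and> (\<Sum>i\<in>B. c i *\<^sub>R z i) = v"
proof -
  have fin: "finite B" and inj: "inj_on z B" using assms unfolding isbasis_def by auto
  have "v \<in> span (z ` B)" using isbasis_span[OF assms] by auto
  then obtain u where u: "v = (\<Sum>x\<in>z ` B. u x *\<^sub>R x)"
    using span_finite[of "z ` B"] fin by auto
  define c where "c i = (if i \<in> B then u (z i) else 0)" for i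
  have "(\<Sum>i\<in>B. c i *\<^sub>R z i) = (\<Sum>i\<in>B. u (z i) *\<^sub>R z i)"
    by (intro sum.cong) (auto simp: c_def)
  also have "\<dots> = v" using u inj by (simp add: sum.reindex)
  finally show ?thesis by (auto simp: c_def intro!: exI[of _ c])
qed

lemma coords_props:
  assumes "isbasis z B"
  shows "\<forall>i. i \<notin> B \<longrightarrow> coords z B v i = 0" "(\<Sum>i\<in>B. coords z B v i *\<^sub>R z i) = v"
proof -
  obtain c where c: "(\<forall>i. i \<notin> B \<longrightarrow> c i = 0)" "(\<Sum>i\<in>B. c i *\<^sub>R z i) = v"
    using coords_exists[OF assms] by blast
  have "coords z B v = c" using coords_eq[OF assms c] .
  then show "\<forall>i. i \<notin> B \<longrightarrow> coords z B v i = 0" "(\<Sum>i\<in>B. coords z B v i *\<^sub>R z i) = v"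
    using c by auto
qed

lemma dual_vec_props:
  fixes z :: "int \<Rightarrow> 'a::euclidean_space"
  assumes "isbasis z B"
  shows "\<forall>m\<in>B. dual_vec z B \<bullet> z m = 1"
proof -
  have fin: "finite B" and inj: "inj_on z B" and ind: "independent (z ` B)"
    using assms unfolding isbasis_def by auto
  have sp: "span (z ` B) = UNIV" using isbasis_span[OF assms] .
  define A where "A y = (\<Sum>m\<in>B. (y \<bullet> z m) *\<^sub>R z m)" for y :: 'a
  have lin: "linear A"
    unfolding A_def by (intro linear_compose_sum) (auto intro!: linearI simp: inner_add_left algebra_simps)
  have orth0: "y = 0" if "\<forall>m\<in>B. y \<bullet> z m = 0" for y :: 'a
  proof -
    have "orthogonal y a" if "a \<in> span (z ` B)" for a
      using orthogonal_to_span[OF that, of y] \<open>\<forall>m\<in>B. y \<bullet> z m = 0\<close> by (auto simp: orthogonal_def)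
    then have "y \<bullet> y = 0" using sp by (auto simp: orthogonal_def)
    then show ?thesis by simp
  qed
  have "inj A"
  proof (rule linear_injective_0[OF lin, THEN iffD2], intro allI impI)
    fix y assume "A y = 0"
    then have "\<forall>m\<in>B. y \<bullet> z m = 0"
      using indep_coeffs_zero[OF fin inj ind, of "\<lambda>m. y \<bullet> z m"] unfolding A_def by blast
    then show "y = 0" using orth0 by blast
  qed
  then have "surj A" using linear_injective_imp_surjective[OF lin] by auto
  then obtain y where y: "A y = (\<Sum>m\<in>B. z m)" by (metis surjD)
  have "(\<Sum>m\<in>B. (y \<bullet> z m - 1) *\<^sub>R z m) = 0"
    using y unfolding A_def by (simp add: scaleR_left_diff_distrib sum_subtractf)
  then have y1: "\<forall>m\<in>B. y \<bullet> z m = 1"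
    using indep_coeffs_zero[OF fin inj ind, of "\<lambda>m. y \<bullet> z m - 1"] by auto
  have "dual_vec z B = y" unfolding dual_vec_def
  proof (rule the_equality)
    show "\<forall>m\<in>B. y \<bullet> z m = 1" by fact
  next
    fix y' assume "\<forall>m\<in>B. y' \<bullet> z m = 1"
    then have "\<forall>m\<in>B. (y' - y) \<bullet> z m = 0" using y1 by (simp add: inner_diff_left)
    then have "y' - y = 0" using orth0 by blast
    then show "y' = y" by simp
  qed
  then show ?thesis using y1 by simp
qed


definition goodB :: "(int \<Rightarrow> 'a::euclidean_space) \<Rightarrow> 'a \<Rightarrow> int set \<Rightarrow> bool" where
  "goodB z p B \<longleftrightarrow> isbasis z B \<and> (\<forall>i\<in>B. 0 \<le> coords z B p i)"

lemma pivot_good: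
  fixes z :: "int \<Rightarrow> 'a::euclidean_space"
  assumes g: "goodB z p B" and piv: "simplex_pivot M z p B B'"
  shows "goodB z p B'"
proof -
  have bas: "isbasis z B" and cnn: "\<forall>i\<in>B. 0 \<le> coords z B p i" using g unfolding goodB_def by auto
  have fin: "finite B" and inj: "inj_on z B" and ind: "independent (z ` B)" and cardB: "card B = DIM('a)"
    using bas unfolding isbasis_def by auto
  obtain j i where jM: "j \<in> M - B" and iB: "i \<in> B"
    and di: "coords z B (z j) i > 0"
    and rat: "\<forall>i'\<in>B. coords z B (z j) i' > 0 \<longrightarrow>
            coords z B p i / coords z B (z j) i \<le> coords z B p i' / coords z B (z j) i'"
    and B': "B' = insert j (B - {i})"
    using piv unfolding simplex_pivot_def by blast
  define d where "d = coords z B (z j)"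
  define c where "c = coords z B p"
  define t where "t = c i / d i"
  have dpos: "d i > 0" using di d_def by simp
  have t0: "t \<ge> 0" using cnn iB dpos by (simp add: t_def c_def)
  have dz: "(\<Sum>m\<in>B. d m *\<^sub>R z m) = z j" and d0: "\<forall>m. m \<notin> B \<longrightarrow> d m = 0"
    using coords_props[OF bas] unfolding d_def by auto
  have cz: "(\<Sum>m\<in>B. c m *\<^sub>R z m) = p" and c0: "\<forall>m. m \<notin> B \<longrightarrow> c m = 0"
    using coords_props[OF bas] unfolding c_def by auto
  have jB: "j \<notin> B" using jM by auto
  have finB': "finite B'" using fin B' by auto
  have cardB': "card B' = DIM('a)"
    using fin iB jB cardB B' by (simp add: card_insert_if)
  have zj_notin: "z j \<notin> z ` (B - {i})"
  proof
    assume "z j \<in> z ` (B - {i})"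
    then obtain i' where i': "i' \<in> B" "i' \<noteq> i" "z j = z i'" by auto
    have "(\<Sum>m\<in>B. (if m = i' then 1 else 0) *\<^sub>R z m) = (\<Sum>m\<in>B. if m = i' then z m else 0)"
      by (intro sum.cong) auto
    also have "\<dots> = z j" using i' fin by simp
    finally have "coords z B (z j) = (\<lambda>m. if m = i' then 1 else 0)"
      by (intro coords_eq[OF bas]) (use i' in auto)
    then have "d i = 0" using i' unfolding d_def by auto
    then show False using dpos by simp
  qed
  have injB': "inj_on z B'" using B' inj zj_notin by (auto intro: inj_on_subset)
  have sub: "z ` B \<subseteq> span (z ` B')"
  proof
    fix x assume "x \<in> z ` B"
    then obtain m where m: "m \<in> B" "x = z m" by auto
    show "x \<in> span (z ` B')"
    proof (cases "m = i")
      case False then show ?thesis using m B' by (auto intro: span_base)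
    next
      case True
      have "(\<Sum>m\<in>B. d m *\<^sub>R z m) = d i *\<^sub>R z i + (\<Sum>m\<in>B - {i}. d m *\<^sub>R z m)"
        using fin iB by (simp add: sum.remove)
      then have "z i = (1 / d i) *\<^sub>R (z j - (\<Sum>m\<in>B - {i}. d m *\<^sub>R z m))"
        using dz dpos by (simp add: algebra_simps)
      moreover have "(1 / d i) *\<^sub>R (z j - (\<Sum>m\<in>B - {i}. d m *\<^sub>R z m)) \<in> span (z ` B')"
        using B' by (intro span_scale span_diff span_sum) (auto intro: span_base)
      ultimately show ?thesis using True m by simp
    qed
  qed
  have "span (z ` B) \<subseteq> span (z ` B')" using sub by (simp add: span_minimal)
  then have "UNIV \<subseteq> span (z ` B')" using isbasis_span[OF bas] by simp
  moreover have "card (z ` B') = dim (UNIV::'a set)"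
    using injB' cardB' by (simp add: card_image)
  ultimately have indB': "independent (z ` B')"
    using card_eq_dim[of "z ` B'" UNIV] finB' by auto
  have basB': "isbasis z B'" unfolding isbasis_def using finB' injB' indB' cardB' by auto
  define c' where "c' m = (if m = j then t else if m \<in> B - {i} then c m - t * d m else 0)" for m
  have "(\<Sum>m\<in>B'. c' m *\<^sub>R z m) = t *\<^sub>R z j + (\<Sum>m\<in>B - {i}. (c m - t * d m) *\<^sub>R z m)"
    using B' fin jB by (simp add: c'_def) (intro sum.cong, auto)
  also have "(\<Sum>m\<in>B - {i}. (c m - t * d m) *\<^sub>R z m) = (\<Sum>m\<in>B. (c m - t * d m) *\<^sub>R z m) - (c i - t * d i) *\<^sub>R z i"
    using fin iB by (simp add: sum_diff1)
  also have "c i - t * d i = 0" using dpos by (simp add: t_def)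
  also have "(\<Sum>m\<in>B. (c m - t * d m) *\<^sub>R z m) = p - t *\<^sub>R z j"
    using cz dz by (simp add: scaleR_left_diff_distrib sum_subtractf scaleR_sum_right[symmetric] flip: scaleR_scaleR)
  finally have sumc': "(\<Sum>m\<in>B'. c' m *\<^sub>R z m) = p" by simp
  have "coords z B' p = c'"
    by (rule coords_eq[OF basB' _ sumc']) (auto simp: c'_def B')
  moreover have "\<forall>m\<in>B'. 0 \<le> c' m"
  proof
    fix m assume "m \<in> B'"
    show "0 \<le> c' m"
    proof (cases "m = j")
      case True then show ?thesis using t0 by (simp add: c'_def)
    next
      case False
      then have m: "m \<in> B" "m \<noteq> i" using \<open>m \<in> B'\<close> B' by auto
      have cm: "0 \<le> c m" using cnn m by (simp add: c_def)
      show ?thesis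
      proof (cases "d m > 0")
        case True
        then have "t \<le> c m / d m" using rat m unfolding t_def c_def d_def by auto
        then have "t * d m \<le> c m" using True by (simp add: le_divide_eq)
        then show ?thesis using False m by (simp add: c'_def)
      next
        case False
        then have "t * d m \<le> 0" using t0 by (simp add: mult_nonneg_nonpos)
        then show ?thesis using cm \<open>m \<noteq> j\<close> m by (simp add: c'_def)
      qed
    qed
  qed
  ultimately show ?thesis using basB' unfolding goodB_def by simp
qed

lemma run_good:
  assumes "goodB z p B0" "simplex_run M z p B0 B"
  shows "goodB z p B"
proof -
  have "(simplex_pivot M z p)\<^sup>*\<^sup>* B0 B" using assms(2) unfolding simplex_run_def by simp
  then show ?thesis using assms(1)
    by (induction rule: rtranclp_induct) (auto intro: pivot_good)
qed

theorem theorem1: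
  fixes C1 C2 :: "'a::euclidean_space set" and p1 p2 :: 'a
    and N :: nat and \<epsilon> K :: real and pperp :: "int \<Rightarrow> 'a"
    and Mi Mstar :: "nat \<Rightarrow> int set" and z z1 z2 :: "int \<Rightarrow> 'a" and lam :: "nat \<Rightarrow> 'a"
    and k :: nat
  assumes "PC_set C1" and "compact C2" and "convex C2" and "C2 \<noteq> {}"
    and "p1 \<in> interior C1" and "p2 \<in> C2" and "p1 \<noteq> p2"
    and "inradius C1 p1 + inradius C2 p2 > 0"
    and run: "gd_run C1 C2 p1 p2 (inradius C1 p1 + inradius C2 p2) N \<epsilon> K pperp Mi Mstar z z1 z2 lam"
    and "k \<le> N"
  shows
    "(let p = p2 - p1; B = Mstar k; \<beta> = beta_low z p B; \<nu> = basic_sol z p B; \<alpha> = 1 / \<beta>;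
          zz = (\<Sum>m\<in>B. (\<beta> * \<nu> m) *\<^sub>R z m);
          zz1 = (\<Sum>m\<in>B. (\<beta> * \<nu> m) *\<^sub>R z1 m);
          zz2 = (\<Sum>m\<in>B. (\<beta> * \<nu> m) *\<^sub>R z2 m)
      in
      \<comment> \<open>(i) primal feasibility\<close>
      ray_feasible (mink_set C1 C2 p) p \<beta> zz \<and>
      gd_feasible C1 C2 p1 p2 \<alpha> zz1 zz2 \<and> 0 < \<beta> \<and> 0 < \<alpha> \<and>
      \<comment> \<open>(ii) dual feasibility\<close>
      (\<forall>m1\<in>B. \<forall>m2\<in>B. lam k \<bullet> z m1 = lam k \<bullet> z m2) \<and> 0 < lam k \<bullet> p \<and>
      \<comment> \<open>(iii) simplex property\<close>
      z ` B \<subseteq> mink_set C1 C2 p \<and> finite B \<and> card B = DIM('a) \<and>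
      inj_on z B \<and> independent (z ` B))"
proof -
  define p where "p = p2 - p1"
  define l where "l = DIM('a)"
  define I0 where "I0 = {- int l + 1 .. 0}"
  define P where "P = {- int l + 1 .. -1}"
  have I0def: "init_idx TYPE('a) = I0" unfolding init_idx_def I0_def l_def by simp
  have R: "0 < \<epsilon> \<and> 0 < K \<and>
      (\<forall>m\<in>P. norm (pperp m) = 1 \<and> pperp m \<bullet> p = 0) \<and>
      inj_on pperp P \<and> independent (pperp ` P) \<and>
      (\<forall>m\<in>P. z m = K *\<^sub>R pperp m + (\<epsilon> / norm p) *\<^sub>R p) \<and>
      z 0 = (real l * \<epsilon> / norm p) *\<^sub>R p - (\<Sum>m\<in>P. z m) \<and>
      (\<forall>m\<in>I0. z1 m \<in> C1 \<and> z2 m \<in> C2 \<and> z m = z1 m - z2 m + p) \<and>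
      Mi 0 = I0 \<and> Mstar 0 = I0 \<and>
      lam 0 = (1 / infnorm p) *\<^sub>R p \<and>
      (\<forall>k. 1 \<le> k \<and> k \<le> N \<longrightarrow>
         is_support_point C1 (lam (k - 1)) (z1 (int k)) \<and>
         is_support_point C2 (- lam (k - 1)) (z2 (int k)) \<and>
         z (int k) = z1 (int k) - z2 (int k) + p \<and>
         simplex_run (insert (int k) (Mi (k - 1))) z p (Mstar (k - 1)) (Mstar k) \<and>
         Mstar k \<subseteq> Mi k \<and> Mi k \<subseteq> insert (int k) (Mi (k - 1)) \<and>
         lam k = (1 / infnorm (dual_vec z (Mstar k))) *\<^sub>R dual_vec z (Mstar k))"
    using run unfolding gd_run_def Let_def I0def unfolding p_def[symmetric] P_def l_def by blast
  have eps: "0 < \<epsilon>" and K0: "0 < K" and perp: "\<forall>m\<in>P. pperp m \<bullet> p = 0"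
    and pinj: "inj_on pperp P" and pind: "independent (pperp ` P)"
    and zP: "\<forall>m\<in>P. z m = K *\<^sub>R pperp m + (\<epsilon> / norm p) *\<^sub>R p"
    and z0: "z 0 = (real l * \<epsilon> / norm p) *\<^sub>R p - (\<Sum>m\<in>P. z m)"
    and zI0: "\<forall>m\<in>I0. z1 m \<in> C1 \<and> z2 m \<in> C2 \<and> z m = z1 m - z2 m + p"
    and Mi0: "Mi 0 = I0" and Ms0: "Mstar 0 = I0" and lam0: "lam 0 = (1 / infnorm p) *\<^sub>R p"
    using R by auto
  have iter: "\<And>k. 1 \<le> k \<Longrightarrow> k \<le> N \<Longrightarrow>
         is_support_point C1 (lam (k - 1)) (z1 (int k)) \<and>
         is_support_point C2 (- lam (k - 1)) (z2 (int k)) \<and>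
         z (int k) = z1 (int k) - z2 (int k) + p \<and>
         simplex_run (insert (int k) (Mi (k - 1))) z p (Mstar (k - 1)) (Mstar k) \<and>
         Mstar k \<subseteq> Mi k \<and> Mi k \<subseteq> insert (int k) (Mi (k - 1)) \<and>
         lam k = (1 / infnorm (dual_vec z (Mstar k))) *\<^sub>R dual_vec z (Mstar k)"
    using R by blast
  have p0: "p \<noteq> 0" using assms(7) unfolding p_def by simp
  have np: "norm p > 0" using p0 by simp
  have l0: "0 < l" unfolding l_def by simp
  have finP: "finite P" unfolding P_def by simp
  have I0eq: "I0 = insert 0 P" and P0: "0 \<notin> P" using l0 unfolding I0_def P_def by auto
  have finI0: "finite I0" unfolding I0_def by simp
  have cardI0: "card I0 = l" unfolding I0_def by simp
  have cardP: "card P = l - 1" unfolding P_def using l0 by simp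
  have sumI0: "(\<Sum>m\<in>I0. z m) = (real l * \<epsilon> / norm p) *\<^sub>R p"
    using finP P0 z0 by (simp add: I0eq)
  have pspan: "p \<in> span (z ` I0)"
  proof -
    have "p = (norm p / (real l * \<epsilon>)) *\<^sub>R (\<Sum>m\<in>I0. z m)"
      using sumI0 np eps l0 by simp
    moreover have "(norm p / (real l * \<epsilon>)) *\<^sub>R (\<Sum>m\<in>I0. z m) \<in> span (z ` I0)"
      by (intro span_scale span_sum) (auto intro: span_base)
    ultimately show ?thesis by simp
  qed
  have perpspan: "pperp m \<in> span (z ` I0)" if "m \<in> P" for m
  proof -
    have "pperp m = (1 / K) *\<^sub>R (z m - (\<epsilon> / norm p) *\<^sub>R p)"
      using zP that K0 by simp
    moreover have "(1 / K) *\<^sub>R (z m - (\<epsilon> / norm p) *\<^sub>R p) \<in> span (z ` I0)"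
      using that pspan I0eq by (intro span_scale span_diff) (auto intro: span_base)
    ultimately show ?thesis by simp
  qed
  define S where "S = insert p (pperp ` P)"
  have pnot: "p \<notin> span (pperp ` P)"
  proof
    assume "p \<in> span (pperp ` P)"
    then have "orthogonal p p"
      by (rule orthogonal_to_span) (use perp in \<open>auto simp: orthogonal_def inner_commute\<close>)
    then show False using p0 by (simp add: orthogonal_def)
  qed
  have indS: "independent S" unfolding S_def using pind pnot by (simp add: independent_insertI)
  have "p \<notin> pperp ` P" using pnot by (auto intro: span_base)
  then have cardS: "card S = l" unfolding S_def using finP pinj cardP l0 by (simp add: card_image)
  have "UNIV \<subseteq> span S"
    using card_eq_dim[of S UNIV] indS cardS finP unfolding S_def l_def by simp
  moreover have "S \<subseteq> span (z ` I0)" unfolding S_def using pspan perpspan by auto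
  ultimately have spanI0: "UNIV \<subseteq> span (z ` I0)"
    by (metis span_minimal subspace_span subset_trans)
  have "dim (UNIV::'a set) \<le> card (z ` I0)" using dim_le_card[OF spanI0] finI0 by simp
  then have "l \<le> card (z ` I0)" unfolding l_def by simp
  moreover have "card (z ` I0) \<le> l" using card_image_le[OF finI0, of z] cardI0 by simp
  ultimately have cz: "card (z ` I0) = card I0" using cardI0 by simp
  have injI0: "inj_on z I0" using eq_card_imp_inj_on[OF finI0 cz] .
  have indI0: "independent (z ` I0)"
    using card_eq_dim[of "z ` I0" UNIV] cz cardI0 spanI0 finI0 unfolding l_def by simp
  have basI0: "isbasis z I0" unfolding isbasis_def using finI0 injI0 indI0 cardI0 l_def by simp
  have "coords z I0 p = (\<lambda>m. if m \<in> I0 then norm p / (real l * \<epsilon>) else 0)"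
  proof (rule coords_eq[OF basI0])
    have "(\<Sum>i\<in>I0. (if i \<in> I0 then norm p / (real l * \<epsilon>) else 0) *\<^sub>R z i)
        = (norm p / (real l * \<epsilon>)) *\<^sub>R (\<Sum>m\<in>I0. z m)"
      by (simp add: scaleR_sum_right)
    also have "\<dots> = p" using sumI0 np eps l0 by simp
    finally show "(\<Sum>i\<in>I0. (if i \<in> I0 then norm p / (real l * \<epsilon>) else 0) *\<^sub>R z i) = p" .
  qed auto
  then have goodI0: "goodB z p I0" unfolding goodB_def using basI0 np eps by simp
  have inv: "goodB z p (Mstar k') \<and> Mstar k' \<subseteq> Mi k' \<and> Mi k' \<subseteq> {- int l + 1 .. int k'}"
    if "k' \<le> N" for k'
    using that
  proof (induction k')
    case 0
    then show ?case using goodI0 Ms0 Mi0 by (simp add: I0_def)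
  next
    case (Suc k')
    then have IH: "goodB z p (Mstar k')" "Mi k' \<subseteq> {- int l + 1 .. int k'}" by auto
    have it: "simplex_run (insert (int (Suc k')) (Mi k')) z p (Mstar k') (Mstar (Suc k'))"
      "Mstar (Suc k') \<subseteq> Mi (Suc k')" "Mi (Suc k') \<subseteq> insert (int (Suc k')) (Mi k')"
      using iter[of "Suc k'"] Suc.prems by auto
    have "goodB z p (Mstar (Suc k'))" using run_good[OF IH(1) it(1)] .
    moreover have "Mi (Suc k') \<subseteq> {- int l + 1 .. int (Suc k')}" proof
      fix x assume "x \<in> Mi (Suc k')"
      then have "x = int (Suc k') \<or> x \<in> Mi k'" using it(3) by auto
      then show "x \<in> {- int l + 1 .. int (Suc k')}" using IH(2) l0 by auto
    qed
    ultimately show ?case using it(2) by simp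
  qed
  have memb: "z1 m \<in> C1 \<and> z2 m \<in> C2 \<and> z m = z1 m - z2 m + p" if "m \<in> {- int l + 1 .. int N}" for m
  proof (cases "m \<le> 0")
    case True then show ?thesis using zI0 that unfolding I0_def by auto
  next
    case False
    then have "1 \<le> nat m" "nat m \<le> N" "m = int (nat m)" using that by auto
    then show ?thesis using iter[of "nat m"] unfolding is_support_point_def by metis
  qed
  define B where "B = Mstar k"
  have gB: "goodB z p B" and BN: "B \<subseteq> {- int l + 1 .. int N}"
    using inv[OF assms(10)] assms(10) unfolding B_def by auto
  have bas: "isbasis z B" and cnn: "\<forall>i\<in>B. 0 \<le> coords z B p i" using gB unfolding goodB_def by auto
  have finB: "finite B" and injB: "inj_on z B" and indB: "independent (z ` B)" and cardB: "card B = DIM('a)"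
    using bas unfolding isbasis_def by auto
  define \<nu> where "\<nu> = basic_sol z p B"
  have \<nu>z: "(\<Sum>m\<in>B. \<nu> m *\<^sub>R z m) = p" using coords_props[OF bas] unfolding \<nu>_def basic_sol_def by auto
  have \<nu>nn: "\<forall>m\<in>B. 0 \<le> \<nu> m" using cnn unfolding \<nu>_def basic_sol_def by auto
  define Ss where "Ss = (\<Sum>m\<in>B. \<nu> m)"
  have Ss0: "0 < Ss"
  proof -
    have "Ss \<ge> 0" unfolding Ss_def using \<nu>nn by (simp add: sum_nonneg)
    moreover have "Ss \<noteq> 0"
    proof
      assume "Ss = 0"
      then have "\<forall>m\<in>B. \<nu> m = 0" using sum_nonneg_eq_0_iff[OF finB] \<nu>nn unfolding Ss_def by blast
      then have "(\<Sum>m\<in>B. \<nu> m *\<^sub>R z m) = 0" by simp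
      then show False using \<nu>z p0 by simp
    qed
    ultimately show ?thesis by simp
  qed
  define \<beta> where "\<beta> = beta_low z p B"
  have \<beta>eq: "\<beta> = 1 / Ss" unfolding \<beta>_def beta_low_def Ss_def \<nu>_def by simp
  have \<beta>0: "0 < \<beta>" using Ss0 \<beta>eq by simp
  have wsum: "(\<Sum>m\<in>B. \<beta> * \<nu> m) = 1" proof -
    have "(\<Sum>m\<in>B. \<beta> * \<nu> m) = \<beta> * Ss" unfolding Ss_def by (simp add: sum_distrib_left)
    then show ?thesis using Ss0 \<beta>eq by simp
  qed
  have wnn: "\<And>m. m \<in> B \<Longrightarrow> 0 \<le> \<beta> * \<nu> m" using \<nu>nn \<beta>0 by simp
  define zz where "zz = (\<Sum>m\<in>B. (\<beta> * \<nu> m) *\<^sub>R z m)"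
  define zz1 where "zz1 = (\<Sum>m\<in>B. (\<beta> * \<nu> m) *\<^sub>R z1 m)"
  define zz2 where "zz2 = (\<Sum>m\<in>B. (\<beta> * \<nu> m) *\<^sub>R z2 m)"
  have zzp: "zz = \<beta> *\<^sub>R p"
    unfolding zz_def using \<nu>z by (simp add: scaleR_sum_right[symmetric] flip: scaleR_scaleR)
  have mB: "\<And>m. m \<in> B \<Longrightarrow> z1 m \<in> C1 \<and> z2 m \<in> C2 \<and> z m = z1 m - z2 m + p"
    using memb BN by auto
  have cvx1: "convex C1" using assms(1) unfolding PC_set_def by simp
  have zz1C: "zz1 \<in> C1" unfolding zz1_def
    by (rule convex_sum[OF finB cvx1 wsum]) (use wnn mB in auto)
  have zz2C: "zz2 \<in> C2" unfolding zz2_def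
    by (rule convex_sum[OF finB assms(3) wsum]) (use wnn mB in auto)
  have "zz = (\<Sum>m\<in>B. (\<beta> * \<nu> m) *\<^sub>R (z1 m - z2 m + p))"
    unfolding zz_def using mB by (intro sum.cong) auto
  also have "\<dots> = zz1 - zz2 + (\<Sum>m\<in>B. \<beta> * \<nu> m) *\<^sub>R p"
    unfolding zz1_def zz2_def
    by (simp add: scaleR_right_distrib scaleR_right_diff_distrib sum.distrib sum_subtractf scaleR_sum_left)
  finally have zzeq: "zz = zz1 - zz2 + p" using wsum by simp
  have zzM: "zz \<in> mink_set C1 C2 p" unfolding mink_set_def using zzeq zz1C zz2C by blast
  have gd: "(1 / \<beta>) *\<^sub>R (zz1 - p1) + p1 = (1 / \<beta>) *\<^sub>R (zz2 - p2) + p2"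
  proof -
    have d: "zz1 - zz2 = (\<beta> - 1) *\<^sub>R p" using zzeq zzp by (simp add: algebra_simps)
    have "(1 / \<beta>) *\<^sub>R (zz1 - zz2) = ((1 / \<beta>) * (\<beta> - 1)) *\<^sub>R p" using d by simp
    also have "(1 / \<beta>) * (\<beta> - 1) = 1 - 1 / \<beta>" using \<beta>0 by (simp add: field_simps)
    finally have e: "(1 / \<beta>) *\<^sub>R (zz1 - zz2) = (1 - 1 / \<beta>) *\<^sub>R (p2 - p1)" unfolding p_def .
    have "((1 / \<beta>) *\<^sub>R (zz1 - p1) + p1) - ((1 / \<beta>) *\<^sub>R (zz2 - p2) + p2)
        = (1 / \<beta>) *\<^sub>R (zz1 - zz2) - (1 - 1 / \<beta>) *\<^sub>R (p2 - p1)"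
      by (simp add: algebra_simps)
    also have "\<dots> = 0" using e by simp
    finally show ?thesis by simp
  qed
  have "\<exists>c>0. \<forall>m\<in>B. lam k \<bullet> z m = c"
  proof (cases "k = 0")
    case True
    have "p \<bullet> z m = \<epsilon> * norm p" if "m \<in> I0" for m
    proof (cases "m = 0")
      case False
      then have "m \<in> P" using that I0eq by auto
      then show ?thesis using zP perp np
        by (simp add: inner_add_right inner_commute dot_square_norm power2_eq_square)
    next
      case True
      have zPp: "\<forall>m\<in>P. p \<bullet> z m = \<epsilon> * norm p" using zP perp np
        by (simp add: inner_add_right inner_commute dot_square_norm power2_eq_square)
      have "p \<bullet> z 0 = real l * \<epsilon> * norm p - (\<Sum>m\<in>P. p \<bullet> z m)"
        using z0 np by (simp add: inner_diff_right inner_sum_right dot_square_norm power2_eq_square)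
      also have "\<dots> = real l * \<epsilon> * norm p - real (l - 1) * (\<epsilon> * norm p)"
        using zPp cardP by simp
      also have "\<dots> = \<epsilon> * norm p" using l0 by (simp add: of_nat_diff algebra_simps)
      finally show ?thesis using True by simp
    qed
    then show ?thesis using True lam0 Ms0 np eps p0 unfolding B_def
      by (intro exI[of _ "\<epsilon> * norm p / infnorm p"]) (auto simp: infnorm_pos_lt)
  next
    case False
    define y where "y = dual_vec z B"
    have y1: "\<forall>m\<in>B. y \<bullet> z m = 1" using dual_vec_props[OF bas] unfolding y_def .
    have "B \<noteq> {}" using cardB by auto
    then have "y \<noteq> 0" using y1 by auto
    then have "infnorm y > 0" by (simp add: infnorm_pos_lt)
    moreover have "lam k = (1 / infnorm y) *\<^sub>R y" using iter[of k] False assms(10) unfolding y_def B_def by simp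
    ultimately show ?thesis using y1 by (intro exI[of _ "1 / infnorm y"]) simp
  qed
  then obtain c where c0: "c > 0" and lc: "\<forall>m\<in>B. lam k \<bullet> z m = c" by blast
  have "lam k \<bullet> p = (\<Sum>m\<in>B. \<nu> m * (lam k \<bullet> z m))"
    using \<nu>z by (metis (no_types, lifting) inner_scaleR_right inner_sum_right sum.cong)
  also have "\<dots> = c * Ss" unfolding Ss_def using lc by (simp add: sum_distrib_left mult.commute)
  finally have lp: "lam k \<bullet> p > 0" using c0 Ss0 by simp
  have zBM: "z ` B \<subseteq> mink_set C1 C2 p" unfolding mink_set_def using mB by blast
  show ?thesis
    unfolding Let_def p_def[symmetric] B_def[symmetric] \<beta>_def[symmetric] \<nu>_def[symmetric]
      zz_def[symmetric] zz1_def[symmetric] zz2_def[symmetric]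
    using zzM zzp zz1C zz2C gd \<beta>0 lc lp zBM finB cardB injB indB
    by (simp add: ray_feasible_def gd_feasible_def)
qed
end
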